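(* Suppose $\mathop{\downarrow}$ satisfies invariance, monotonicity, full existence and stationarity. Then for all closed tuples $a,b$ and closed sets $C$ with $C\subseteq a\cap b$, if $a\mathop{\downarrow}_C b$ then $a\mathop{\downarrow}^d_C b$ (and hence $a\mathop{\downarrow}^a_C b$).
   Context: $\mathbb M$ monster model; closed = algebraically closed; $\equiv_C$ = conjugacy under automorphisms fixing $C$ pointwise. Invariance: $A\mathop{\downarrow}_C B$, $\sigma\in\operatorname{Aut}(\mathbb M)$ imply $\sigma(A)\mathop{\downarrow}_{\sigma(C)}\sigma(B)$. Monotonicity: $A\mathop{\downarrow}_C B$, $A_0\subseteq A$, $B_0\subseteq B$ imply $A_0\mathop{\downarrow}_C B_0$. Full existence: for closed $C$, any $B$ and tuple $a$, some $a'\equiv_C a$ has $a'\mathop{\downarrow}_C B$. Stationarity: for closed $C$ and closed tuples $a,a',b$ with $C\subseteq a\cap b$, $a\mathop{\downarrow}_C b$, $a'\mathop{\downarrow}_C b$, $a'\equiv_C a$ imply $ab\equiv_C a'b$. $a\mathop{\downarrow}^d_C b$ iff for every $C$-indiscernible $(b_i)_{i<\omega}$ with $b_0=b$ there is $a'$ with $a'b_i\equiv_C ab$ for all $i$. $A\mathop{\downarrow}^a_C B$ iff $\operatorname{acl}(AC)\cap\operatorname{acl}(BC)=\operatorname{acl}(C)$. *)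

theory Defs
  imports Main
begin

text \<open>
Abstract rendering of the monster-model setting.
  \<^item> 'm is the universe of the monster model M;
  \<^item> Aut is its automorphism group (a set of permutations of 'm);
  \<^item> acl is the algebraic closure operator;
  \<^item> small singles out the small subsets (all parameter sets are small).
Tuples are functions from an index type into 'm; the set of entries of a tuple a
is range a. An independence relation ind is given on sets: ind A C B means
A independent from B over C.
\<close>

definition fixes_pw :: "('m \<Rightarrow> 'm) \<Rightarrow> 'm set \<Rightarrow> bool" where
  "fixes_pw \<sigma> C \<longleftrightarrow> (\<forall>c\<in>C. \<sigma> c = c)"

definition conj :: "('m \<Rightarrow> 'm) set \<Rightarrow> 'm set \<Rightarrow> ('i \<Rightarrow> 'm) \<Rightarrow> ('i \<Rightarrow> 'm) \<Rightarrow> bool" where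
  "conj Aut C a a' \<longleftrightarrow> (\<exists>\<sigma>\<in>Aut. fixes_pw \<sigma> C \<and> \<sigma> \<circ> a = a')"

definition tup :: "('i \<Rightarrow> 'm) \<Rightarrow> ('j \<Rightarrow> 'm) \<Rightarrow> ('i + 'j \<Rightarrow> 'm)" where
  "tup a b = case_sum a b"

definition closed :: "('m set \<Rightarrow> 'm set) \<Rightarrow> 'm set \<Rightarrow> bool" where
  "closed acl A \<longleftrightarrow> acl A = A"

definition closed_tuple :: "('m set \<Rightarrow> 'm set) \<Rightarrow> ('i \<Rightarrow> 'm) \<Rightarrow> bool" where
  "closed_tuple acl a \<longleftrightarrow> closed acl (range a)"

definition monster_setting ::
  "('m \<Rightarrow> 'm) set \<Rightarrow> ('m set \<Rightarrow> 'm set) \<Rightarrow> ('m set \<Rightarrow> bool) \<Rightarrow> bool" where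
  "monster_setting Aut acl small \<longleftrightarrow>
     (\<forall>\<sigma>\<in>Aut. bij \<sigma>) \<and> id \<in> Aut \<and>
     (\<forall>\<sigma>\<in>Aut. \<forall>\<tau>\<in>Aut. \<sigma> \<circ> \<tau> \<in> Aut) \<and> (\<forall>\<sigma>\<in>Aut. inv \<sigma> \<in> Aut) \<and>
     (\<forall>A. A \<subseteq> acl A) \<and> (\<forall>A B. A \<subseteq> B \<longrightarrow> acl A \<subseteq> acl B) \<and> (\<forall>A. acl (acl A) = acl A) \<and>
     (\<forall>\<sigma>\<in>Aut. \<forall>A. acl (\<sigma> ` A) = \<sigma> ` acl A) \<and>
     (\<forall>A B. small B \<longrightarrow> A \<subseteq> B \<longrightarrow> small A) \<and>
     (\<forall>\<sigma>\<in>Aut. \<forall>A. small A \<longrightarrow> small (\<sigma> ` A)) \<and>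
     (\<forall>A. small A \<longrightarrow> small (acl A)) \<and>
     (\<forall>F :: nat \<Rightarrow> 'm set. (\<forall>n. small (F n)) \<longrightarrow> small (\<Union>n. F n))"

definition invariance :: "('m \<Rightarrow> 'm) set \<Rightarrow> ('m set \<Rightarrow> 'm set \<Rightarrow> 'm set \<Rightarrow> bool) \<Rightarrow> bool" where
  "invariance Aut ind \<longleftrightarrow>
     (\<forall>\<sigma>\<in>Aut. \<forall>A B C. ind A C B \<longrightarrow> ind (\<sigma> ` A) (\<sigma> ` C) (\<sigma> ` B))"

definition monotonicity :: "('m set \<Rightarrow> 'm set \<Rightarrow> 'm set \<Rightarrow> bool) \<Rightarrow> bool" where
  "monotonicity ind \<longleftrightarrow>
     (\<forall>A B C A0 B0. ind A C B \<longrightarrow> A0 \<subseteq> A \<longrightarrow> B0 \<subseteq> B \<longrightarrow> ind A0 C B0)"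

definition full_existence ::
  "('m \<Rightarrow> 'm) set \<Rightarrow> ('m set \<Rightarrow> 'm set) \<Rightarrow> ('m set \<Rightarrow> bool)
   \<Rightarrow> ('m set \<Rightarrow> 'm set \<Rightarrow> 'm set \<Rightarrow> bool) \<Rightarrow> 'i itself \<Rightarrow> bool" where
  "full_existence Aut acl small ind (_ :: 'i itself) \<longleftrightarrow>
     (\<forall>C B (a :: 'i \<Rightarrow> 'm). small C \<longrightarrow> closed acl C \<longrightarrow> small B \<longrightarrow> small (range a) \<longrightarrow>
        (\<exists>a'. conj Aut C a a' \<and> ind (range a') C B))"

definition stationarity ::
  "('m \<Rightarrow> 'm) set \<Rightarrow> ('m set \<Rightarrow> 'm set) \<Rightarrow> ('m set \<Rightarrow> bool)
   \<Rightarrow> ('m set \<Rightarrow> 'm set \<Rightarrow> 'm set \<Rightarrow> bool) \<Rightarrow> 'i itself \<Rightarrow> 'j itself \<Rightarrow> bool" where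
  "stationarity Aut acl small ind (_ :: 'i itself) (_ :: 'j itself) \<longleftrightarrow>
     (\<forall>C (a :: 'i \<Rightarrow> 'm) a' (b :: 'j \<Rightarrow> 'm).
        small C \<longrightarrow> closed acl C \<longrightarrow>
        small (range a) \<longrightarrow> small (range a') \<longrightarrow> small (range b) \<longrightarrow>
        closed_tuple acl a \<longrightarrow> closed_tuple acl a' \<longrightarrow> closed_tuple acl b \<longrightarrow>
        C \<subseteq> range a \<inter> range b \<longrightarrow>
        ind (range a) C (range b) \<longrightarrow> ind (range a') C (range b) \<longrightarrow> conj Aut C a' a \<longrightarrow>
        conj Aut C (tup a b) (tup a' b))"

definition indiscernible :: "('m \<Rightarrow> 'm) set \<Rightarrow> 'm set \<Rightarrow> (nat \<Rightarrow> 'j \<Rightarrow> 'm) \<Rightarrow> bool" where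
  "indiscernible Aut C bs \<longleftrightarrow>
     (\<forall>n (i :: nat \<Rightarrow> nat) (j :: nat \<Rightarrow> nat).
        strict_mono_on {..<n} i \<longrightarrow> strict_mono_on {..<n} j \<longrightarrow>
        (\<exists>\<sigma>\<in>Aut. fixes_pw \<sigma> C \<and> (\<forall>k<n. \<sigma> \<circ> bs (i k) = bs (j k))))"

definition dind :: "('m \<Rightarrow> 'm) set \<Rightarrow> 'm set \<Rightarrow> ('i \<Rightarrow> 'm) \<Rightarrow> ('j \<Rightarrow> 'm) \<Rightarrow> bool" where
  "dind Aut C a b \<longleftrightarrow>
     (\<forall>bs :: nat \<Rightarrow> 'j \<Rightarrow> 'm. indiscernible Aut C bs \<longrightarrow> bs 0 = b \<longrightarrow>
        (\<exists>a' :: 'i \<Rightarrow> 'm. \<forall>i. conj Aut C (tup a' (bs i)) (tup a b)))"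

definition aind :: "('m set \<Rightarrow> 'm set) \<Rightarrow> 'm set \<Rightarrow> 'm set \<Rightarrow> 'm set \<Rightarrow> bool" where
  "aind acl A C B \<longleftrightarrow> acl (A \<union> C) \<inter> acl (B \<union> C) = acl C"

end

theory Submission
  imports Defs
begin

lemma ms_facts:
  assumes "monster_setting Aut acl small"
  shows "\<forall>\<sigma>\<in>Aut. bij \<sigma>" "\<forall>\<sigma>\<in>Aut. \<forall>\<tau>\<in>Aut. \<sigma> \<circ> \<tau> \<in> Aut" "\<forall>\<sigma>\<in>Aut. inv \<sigma> \<in> Aut"
    "\<forall>\<sigma>\<in>Aut. \<forall>A. acl (\<sigma> ` A) = \<sigma> ` acl A"
    "\<forall>\<sigma>\<in>Aut. \<forall>A. small A \<longrightarrow> small (\<sigma> ` A)"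
    "\<forall>F :: nat \<Rightarrow> _ set. (\<forall>n. small (F n)) \<longrightarrow> small (\<Union>n. F n)"
  by (insert assms[unfolded monster_setting_def], (elim conjE, assumption))+

lemma inv_fixes:
  assumes "bij \<sigma>" "fixes_pw \<sigma> C" shows "fixes_pw (inv \<sigma>) C"
  unfolding fixes_pw_def
proof
  fix c assume "c \<in> C"
  then have "\<sigma> c = c" using assms(2) unfolding fixes_pw_def by blast
  then have "inv \<sigma> (\<sigma> c) = inv \<sigma> c" by simp
  moreover have "inv \<sigma> (\<sigma> c) = c" using assms(1) by (simp add: bij_is_inj inv_f_f)
  ultimately show "inv \<sigma> c = c" by simp
qed

lemma conj_sym:
  assumes ms: "monster_setting Aut acl small" and c: "conj Aut C x y"
  shows "conj Aut C y x"
proof -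
  from c obtain \<sigma> where s: "\<sigma> \<in> Aut" "fixes_pw \<sigma> C" "\<sigma> \<circ> x = y" unfolding conj_def by blast
  have b: "bij \<sigma>" using ms_facts(1)[OF ms] s by blast
  have "inv \<sigma> \<circ> y = (inv \<sigma> \<circ> \<sigma>) \<circ> x" using s(3) by (simp add: comp_assoc)
  also have "inv \<sigma> \<circ> \<sigma> = id" using b by (simp add: bij_is_inj inv_o_cancel)
  finally have "inv \<sigma> \<circ> y = x" by (simp add: comp_def)
  moreover have "inv \<sigma> \<in> Aut" using ms_facts(3)[OF ms] s by blast
  ultimately show ?thesis using inv_fixes[OF b s(2)] unfolding conj_def by blast
qed

lemma conj_trans:
  assumes ms: "monster_setting Aut acl small" and "conj Aut C x y" "conj Aut C y z"
  shows "conj Aut C x z"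
proof -
  from assms obtain \<sigma> \<tau> where s: "\<sigma> \<in> Aut" "fixes_pw \<sigma> C" "\<sigma> \<circ> x = y"
    "\<tau> \<in> Aut" "fixes_pw \<tau> C" "\<tau> \<circ> y = z" unfolding conj_def by blast
  have "\<tau> \<circ> \<sigma> \<in> Aut" using ms_facts(2)[OF ms] s by blast
  moreover have "fixes_pw (\<tau> \<circ> \<sigma>) C" using s unfolding fixes_pw_def by simp
  moreover have "(\<tau> \<circ> \<sigma>) \<circ> x = z" using s by (simp add: comp_assoc)
  ultimately show ?thesis unfolding conj_def by blast
qed

lemma tup_comp: "\<sigma> \<circ> tup a b = tup (\<sigma> \<circ> a) (\<sigma> \<circ> b)"
  by (rule ext) (auto simp: tup_def split: sum.split)

lemma closed_comp:
  assumes ms: "monster_setting Aut acl small" and "\<pi> \<in> Aut" "closed_tuple acl x"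
  shows "closed_tuple acl (\<pi> \<circ> x)"
proof -
  have "range (\<pi> \<circ> x) = \<pi> ` range x" by (simp add: image_comp)
  then show ?thesis using assms ms_facts(4)[OF ms] unfolding closed_tuple_def closed_def by simp
qed

lemma small_comp:
  assumes ms: "monster_setting Aut acl small" and "\<pi> \<in> Aut" "small (range x)"
  shows "small (range (\<pi> \<circ> x))"
proof -
  have "range (\<pi> \<circ> x) = \<pi> ` range x" by (simp add: image_comp)
  then show ?thesis using assms ms_facts(5)[OF ms] by simp
qed

theorem lemma7p15:
  fixes Aut :: "('m \<Rightarrow> 'm) set"
    and acl :: "'m set \<Rightarrow> 'm set"
    and small :: "'m set \<Rightarrow> bool"
    and ind :: "'m set \<Rightarrow> 'm set \<Rightarrow> 'm set \<Rightarrow> bool"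
    and a :: "'i \<Rightarrow> 'm" and b :: "'j \<Rightarrow> 'm" and C :: "'m set"
  assumes "monster_setting Aut acl small"
    and "invariance Aut ind"
    and "monotonicity ind"
    and "full_existence Aut acl small ind TYPE('i)"
    and "stationarity Aut acl small ind TYPE('i) TYPE('j)"
    and "small (range a)" and "small (range b)" and "small C"
    and "closed_tuple acl a" and "closed_tuple acl b" and "closed acl C"
    and "C \<subseteq> range a \<inter> range b"
    and "ind (range a) C (range b)"
  shows "dind Aut C a b"
  unfolding dind_def
proof (intro allI impI)
  note ms = assms(1)
  fix bs :: "nat \<Rightarrow> 'j \<Rightarrow> 'm"
  assume indi: "indiscernible Aut C bs" and b0: "bs 0 = b"
  have ex: "\<exists>\<sigma>\<in>Aut. fixes_pw \<sigma> C \<and> \<sigma> \<circ> b = bs k" for k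
  proof -
    have h1: "strict_mono_on {..<1} (\<lambda>_::nat. 0::nat)" "strict_mono_on {..<1} (\<lambda>_::nat. k)"
      by (auto simp: strict_mono_on_def)
    obtain \<sigma> where "\<sigma>\<in>Aut" "fixes_pw \<sigma> C" "\<forall>i<(1::nat). \<sigma> \<circ> bs 0 = bs k"
      using indi[unfolded indiscernible_def, rule_format, OF h1] by blast
    then show ?thesis using b0 by auto
  qed
  define B where "B = (\<Union>n. range (bs n))"
  have "small (range (bs n))" for n
  proof -
    obtain \<sigma> where "\<sigma>\<in>Aut" "\<sigma> \<circ> b = bs n" using ex[of n] by blast
    then show ?thesis using small_comp[OF ms _ assms(7), of \<sigma>] by simp
  qed
  then have smB: "small B" unfolding B_def using ms_facts(6)[OF ms, rule_format, of "\<lambda>n. range (bs n)"] by blast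
  obtain a' where a': "conj Aut C a a'" "ind (range a') C B"
    using assms(4)[unfolded full_existence_def, rule_format, OF assms(8,11) smB assms(6)] by blast
  obtain \<tau> where tau: "\<tau> \<in> Aut" "\<tau> \<circ> a = a'" using a'(1) unfolding conj_def by blast
  have cla': "closed_tuple acl a'" using closed_comp[OF ms tau(1) assms(9)] tau by simp
  have sma': "small (range a')" using small_comp[OF ms tau(1) assms(6)] tau by simp
  show "\<exists>a'. \<forall>i. conj Aut C (tup a' (bs i)) (tup a b)"
  proof (intro exI allI)
    fix k
    obtain \<sigma> where s: "\<sigma>\<in>Aut" "fixes_pw \<sigma> C" "\<sigma> \<circ> b = bs k" using ex by blast
    have bs: "bij \<sigma>" using s ms_facts(1)[OF ms] by blast
    define \<rho> where "\<rho> = inv \<sigma>"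
    have r: "\<rho> \<in> Aut" "fixes_pw \<rho> C" using s ms_facts(3)[OF ms] inv_fixes[OF bs s(2)]
      unfolding \<rho>_def by auto
    have rs: "\<rho> \<circ> \<sigma> = id" "\<sigma> \<circ> \<rho> = id" unfolding \<rho>_def
      using bs bij_is_inj inv_o_cancel apply blast
      using bs bij_is_surj surj_iff by blast
    define a'' where "a'' = \<rho> \<circ> a'"
    have i1: "ind (range a') C (range (bs k))"
      using assms(3)[unfolded monotonicity_def, rule_format, OF a'(2) order_refl, of "range (bs k)"]
      unfolding B_def by blast
    have rC: "\<rho> ` C = C" using r(2) unfolding fixes_pw_def by force
    have "\<rho> \<circ> bs k = (\<rho> \<circ> \<sigma>) \<circ> b" using s(3) by (simp add: comp_assoc)
    then have "\<rho> \<circ> bs k = b" using rs by simp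
    moreover have "\<rho> ` range (bs k) = range (\<rho> \<circ> bs k)" by (simp add: image_comp)
    ultimately have e1: "\<rho> ` range (bs k) = range b" by simp
    have e2: "\<rho> ` range a' = range a''" unfolding a''_def by (simp add: image_comp)
    have "ind (\<rho> ` range a') (\<rho> ` C) (\<rho> ` range (bs k))"
      using assms(2) r(1) i1 unfolding invariance_def by blast
    then have i2: "ind (range a'') C (range b)" using e1 e2 rC by simp
    have c1: "conj Aut C a' a''" unfolding conj_def a''_def using r by blast
    have c2: "conj Aut C a'' a" by (rule conj_sym[OF ms conj_trans[OF ms a'(1) c1]])
    have m1: "conj Aut C (tup a b) (tup a'' b)"
    proof -
      have cl: "closed_tuple acl a''" "small (range a'')"
        unfolding a''_def using closed_comp[OF ms r(1) cla'] small_comp[OF ms r(1) sma'] by auto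
      have st: "\<And>C (a :: 'i \<Rightarrow> 'm) a' (b :: 'j \<Rightarrow> 'm).
        small C \<Longrightarrow> closed acl C \<Longrightarrow>
        small (range a) \<Longrightarrow> small (range a') \<Longrightarrow> small (range b) \<Longrightarrow>
        closed_tuple acl a \<Longrightarrow> closed_tuple acl a' \<Longrightarrow> closed_tuple acl b \<Longrightarrow>
        C \<subseteq> range a \<inter> range b \<Longrightarrow>
        ind (range a) C (range b) \<Longrightarrow> ind (range a') C (range b) \<Longrightarrow> conj Aut C a' a \<Longrightarrow>
        conj Aut C (tup a b) (tup a' b)"
        using assms(5) unfolding stationarity_def by simp
      show ?thesis by (rule st[OF assms(8,11,6) cl(2) assms(7,9) cl(1) assms(10,12,13) i2 c2])
    qed
    have m2: "conj Aut C (tup a'' b) (tup a' (bs k))"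
    proof -
      have "\<sigma> \<circ> tup a'' b = tup a' (bs k)" unfolding tup_comp a''_def
        using rs s(3) by (simp add: comp_assoc[symmetric])
      then show ?thesis using s unfolding conj_def by blast
    qed
    show "conj Aut C (tup a' (bs k)) (tup a b)"
      by (rule conj_sym[OF ms conj_trans[OF ms m1 m2]])
  qed
qed

end
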